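(* Let $A$ be an infinite alphabet. If $X \subseteq A^*$ is recognizable, then there exists an equivalence relation $\sim$ on $A$ of finite index such that $X = \pi_\sim^{-1}(\pi_\sim(X))$, where $\pi_\sim\colon A^* \to (A/{\sim})^*$ is the projection morphism of $\sim$.
   Context: $A^*$ denotes the free monoid of finite words over $A$. For an equivalence relation $\sim$ on $A$, the projection morphism $\pi_\sim\colon A^*\to (A/{\sim})^*$ is the monoid morphism sending each letter $a$ to its equivalence class $[a]_\sim$. A subset $S$ of a monoid $M$ is recognizable if there exist a finite monoid $N$, a monoid morphism $\varphi\colon M \to N$ and a subset $T \subseteq N$ with $S = \varphi^{-1}(T)$. *)

theory Defs
  imports "HOL-Algebra.Group"
begin

definition free_monoid :: "'a list monoid" where
  "free_monoid = \<lparr>carrier = UNIV, mult = (@), one = []\<rparr>"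

definition monoid_morphism :: "('a, 'c) monoid_scheme \<Rightarrow> ('b, 'd) monoid_scheme \<Rightarrow> ('a \<Rightarrow> 'b) \<Rightarrow> bool" where
  "monoid_morphism M N phi \<longleftrightarrow> phi \<in> hom M N \<and> phi \<one>\<^bsub>M\<^esub> = \<one>\<^bsub>N\<^esub>"

definition recognized_by :: "('a, 'c) monoid_scheme \<Rightarrow> 'a set \<Rightarrow> ('b, 'd) monoid_scheme \<Rightarrow> ('a \<Rightarrow> 'b) \<Rightarrow> 'b set \<Rightarrow> bool" where
  "recognized_by M S N phi T \<longleftrightarrow>
     monoid N \<and> finite (carrier N) \<and> monoid_morphism M N phi \<and> T \<subseteq> carrier N \<and>
     S = {x \<in> carrier M. phi x \<in> T}"

definition proj :: "('a \<times> 'a) set \<Rightarrow> 'a list \<Rightarrow> 'a set list" where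
  "proj R w = map (\<lambda>a. R `` {a}) w"

end

theory Submission
  imports Defs
begin

theorem proposition5:
  fixes X :: "'a list set" and N :: "('b, 'd) monoid_scheme" and phi :: "'a list \<Rightarrow> 'b" and T :: "'b set"
  assumes "infinite (UNIV :: 'a set)"
    and "recognized_by free_monoid X N phi T"
  shows "\<exists>R. equiv UNIV R \<and> finite (UNIV // R) \<and> X = proj R -` (proj R ` X)"
proof -
  have fin: "finite (carrier N)" and hom: "phi \<in> hom free_monoid N"
    and X: "X = {x. phi x \<in> T}"
    using assms(2) unfolding recognized_by_def monoid_morphism_def free_monoid_def by auto
  have mult: "phi (x @ y) = phi x \<otimes>\<^bsub>N\<^esub> phi y" for x y
    using hom unfolding hom_def free_monoid_def by auto
  have incar: "phi x \<in> carrier N" for x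
    using hom unfolding hom_def free_monoid_def by auto
  define R where "R = {(a, b). phi [a] = phi [b]}"
  have eq: "equiv UNIV R" unfolding R_def equiv_def refl_on_def sym_def trans_def by auto
  have cls: "R `` {a} = {b. phi [b] = phi [a]}" for a unfolding R_def by auto
  have "UNIV // R \<subseteq> (\<lambda>y. {b. phi [b] = y}) ` carrier N"
    unfolding quotient_def using cls incar by auto
  hence finq: "finite (UNIV // R)" using fin finite_surj by blast
  have key: "\<forall>w. proj R u = proj R w \<longrightarrow> phi u = phi w" for u
  proof (induction u)
    case Nil then show ?case by (simp add: proj_def)
  next
    case (Cons a u)
    show ?case
    proof (intro allI impI)
      fix w assume h: "proj R (a # u) = proj R w"
      then obtain b w' where w: "w = b # w'" by (cases w) (auto simp: proj_def)
      with h have "R `` {a} = R `` {b}" and "proj R u = proj R w'" by (auto simp: proj_def)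
      hence "phi [a] = phi [b]" "phi u = phi w'" using cls Cons by auto
      then show "phi (a # u) = phi w"
        using mult[of "[a]" u] mult[of "[b]" w'] w by simp
    qed
  qed
  have "X = proj R -` (proj R ` X)"
  proof
    show "X \<subseteq> proj R -` (proj R ` X)" by auto
    show "proj R -` (proj R ` X) \<subseteq> X"
    proof
      fix u assume "u \<in> proj R -` (proj R ` X)"
      then obtain w where "w \<in> X" "proj R u = proj R w" by auto
      then have wT: "phi w \<in> T" and e: "phi u = phi w" using key X by blast+
      then have "phi u \<in> T" by simp
      then show "u \<in> X" using X by blast
    qed
  qed
  with eq finq show ?thesis by blast
qed

end
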